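(* Let $S_1$ be a set with $|S_1| \le k$ satisfying $g(S_1) \ge (1 - 1/e)\max_{S \subseteq V, |S| \le k} g(S)$ (e.g., the output of the classic greedy algorithm), and let $S_2 = \{u,v\}$ with $\mathrm{dist}(u,v) = d_{\max}$, and assume $k \ge 2$. Then $$\max\{f(S_1), f(S_2)\} \ge \frac{e-1}{2e-1}\cdot \mathrm{OPT} \;(\approx 0.387\cdot\mathrm{OPT}).$$
   Context: Let $V$ be a finite set of $n$ points in a metric space with metric $\mathrm{dist}$, and let $d_{\max} = \max_{u,v \in V}\mathrm{dist}(u,v)$. The max-min diversity is $\mathrm{div}(S) = \min_{u,v \in S,\, u \ne v}\mathrm{dist}(u,v)$ if $|S| \ge 2$, and $\mathrm{div}(S) = d_{\max}$ if $|S| \le 1$. Let $g : 2^V \to \mathbb{R}_{\ge 0}$ be a nonnegative monotone submodular function, $\lambda \ge 0$, $k \ge 1$ an integer, and $f(S) = g(S) + \lambda\cdot \mathrm{div}(S)$. $\mathrm{OPT} = \max_{S \subseteq V, |S| \le k} f(S)$. *)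

theory Defs
  imports "HOL-Analysis.Analysis"
begin

definition metric_on :: "'a set \<Rightarrow> ('a \<Rightarrow> 'a \<Rightarrow> real) \<Rightarrow> bool" where
  "metric_on V d \<longleftrightarrow>
     (\<forall>x\<in>V. \<forall>y\<in>V. d x y \<ge> 0) \<and>
     (\<forall>x\<in>V. \<forall>y\<in>V. d x y = 0 \<longleftrightarrow> x = y) \<and>
     (\<forall>x\<in>V. \<forall>y\<in>V. d x y = d y x) \<and>
     (\<forall>x\<in>V. \<forall>y\<in>V. \<forall>z\<in>V. d x z \<le> d x y + d y z)"

definition dmax :: "'a set \<Rightarrow> ('a \<Rightarrow> 'a \<Rightarrow> real) \<Rightarrow> real" where
  "dmax V d = Max {d u v | u v. u \<in> V \<and> v \<in> V}"

definition diversity :: "'a set \<Rightarrow> ('a \<Rightarrow> 'a \<Rightarrow> real) \<Rightarrow> 'a set \<Rightarrow> real" where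
  "diversity V d S = (if card S \<ge> 2 then Min {d u v | u v. u \<in> S \<and> v \<in> S \<and> u \<noteq> v}
                      else dmax V d)"

definition monotone_set_fun :: "'a set \<Rightarrow> ('a set \<Rightarrow> real) \<Rightarrow> bool" where
  "monotone_set_fun V g \<longleftrightarrow> (\<forall>A B. A \<subseteq> B \<and> B \<subseteq> V \<longrightarrow> g A \<le> g B)"

definition submodular :: "'a set \<Rightarrow> ('a set \<Rightarrow> real) \<Rightarrow> bool" where
  "submodular V g \<longleftrightarrow> (\<forall>A B. A \<subseteq> V \<and> B \<subseteq> V \<longrightarrow> g (A \<union> B) + g (A \<inter> B) \<le> g A + g B)"

definition objective :: "'a set \<Rightarrow> ('a \<Rightarrow> 'a \<Rightarrow> real) \<Rightarrow> ('a set \<Rightarrow> real) \<Rightarrow> real \<Rightarrow> 'a set \<Rightarrow> real" where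
  "objective V d g lam S = g S + lam * diversity V d S"

definition OPT :: "'a set \<Rightarrow> ('a \<Rightarrow> 'a \<Rightarrow> real) \<Rightarrow> ('a set \<Rightarrow> real) \<Rightarrow> real \<Rightarrow> nat \<Rightarrow> real" where
  "OPT V d g lam k = Max {objective V d g lam S | S. S \<subseteq> V \<and> card S \<le> k}"

definition gmax :: "'a set \<Rightarrow> ('a set \<Rightarrow> real) \<Rightarrow> nat \<Rightarrow> real" where
  "gmax V g k = Max {g S | S. S \<subseteq> V \<and> card S \<le> k}"

end

theory Submission
  imports Defs
begin

lemma dmax_ge:
  assumes "finite V" "x \<in> V" "y \<in> V"
  shows "d x y \<le> dmax V d"
proof -
  have "finite {d u v | u v. u \<in> V \<and> v \<in> V}"
    using assms(1) by (simp add: finite_image_set2)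
  thus ?thesis unfolding dmax_def using assms by (intro Max_ge) auto
qed

lemma div_bounds:
  assumes "finite V" "metric_on V d" "S \<subseteq> V" "V \<noteq> {}"
  shows "0 \<le> diversity V d S \<and> diversity V d S \<le> dmax V d"
proof (cases "card S \<ge> 2")
  case True
  let ?M = "{d u v | u v. u \<in> S \<and> v \<in> S \<and> u \<noteq> v}"
  have fS: "finite S" using assms(1,3) finite_subset by blast
  have "?M \<subseteq> (\<lambda>(x,y). d x y) ` (S \<times> S)" by auto
  hence fin: "finite ?M" using fS finite_subset by blast
  obtain a where aS: "a \<in> S" using True by fastforce
  have "card (S - {a}) \<ge> 1" using True aS fS by simp
  hence "S - {a} \<noteq> {}" by (metis card.empty not_one_le_zero)
  then obtain b where "b \<in> S - {a}" by blast
  hence ab: "a \<in> S" "b \<in> S" "a \<noteq> b" using aS by auto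
  have ne: "?M \<noteq> {}" using ab by blast
  have nn: "\<forall>x\<in>?M. 0 \<le> x"
  proof
    fix x assume "x \<in> ?M"
    then obtain p q where pq: "p \<in> S" "q \<in> S" "x = d p q" by blast
    have pV: "p \<in> V" "q \<in> V" using pq(1,2) assms(3) by auto
    have "\<forall>x\<in>V. \<forall>y\<in>V. d x y \<ge> 0" using assms(2) unfolding metric_on_def by simp
    hence "d p q \<ge> 0" using pV by simp
    thus "0 \<le> x" using pq(3) by simp
  qed
  have "0 \<le> Min ?M" using fin ne nn by (simp add: Min_ge_iff)
  have "d a b \<in> ?M" using ab by blast
  hence "Min ?M \<le> d a b" using fin by (rule Min_le[rotated])
  moreover have "d a b \<le> dmax V d" using ab assms(3) by (intro dmax_ge[OF assms(1)]) auto
  moreover have "diversity V d S = Min ?M" using True unfolding diversity_def by simp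
  ultimately show ?thesis using \<open>0 \<le> Min ?M\<close> by linarith
next
  case False
  obtain x where "x \<in> V" using assms(4) by blast
  hence "d x x \<le> dmax V d" using dmax_ge[OF assms(1)] by blast
  moreover have "\<forall>x\<in>V. \<forall>y\<in>V. d x y \<ge> 0" using assms(2) unfolding metric_on_def by simp
  hence "d x x \<ge> 0" using \<open>x \<in> V\<close> by simp
  moreover have "diversity V d S = dmax V d" using False unfolding diversity_def by simp
  ultimately show ?thesis by linarith
qed

theorem mainTheorem9:
  fixes V :: "'a set" and d :: "'a \<Rightarrow> 'a \<Rightarrow> real" and g :: "'a set \<Rightarrow> real"
    and lam :: real and k :: nat and S1 :: "'a set" and u v :: 'a
  assumes "finite V"
    and "metric_on V d"
    and "\<forall>S\<subseteq>V. g S \<ge> 0"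
    and "monotone_set_fun V g"
    and "submodular V g"
    and "lam \<ge> 0"
    and "k \<ge> 2"
    and "S1 \<subseteq> V" and "card S1 \<le> k"
    and "g S1 \<ge> (1 - 1 / exp 1) * gmax V g k"
    and "u \<in> V" and "v \<in> V" and "d u v = dmax V d"
  shows "max (objective V d g lam S1) (objective V d g lam {u, v})
           \<ge> (exp 1 - 1) / (2 * exp 1 - 1) * OPT V d g lam k"
proof -
  have Vne: "V \<noteq> {}" using assms(11) by blast
  define G where "G = gmax V g k"
  define L where "L = lam * dmax V d"
  define a :: real where "a = 1 - 1 / exp 1"
  have fP: "finite {S. S \<subseteq> V \<and> card S \<le> k}" using assms(1) by simp
  have OPTle: "OPT V d g lam k \<le> G + L"
  proof -
    let ?A = "{objective V d g lam S | S. S \<subseteq> V \<and> card S \<le> k}"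
    have "?A = (\<lambda>S. objective V d g lam S) ` {S. S \<subseteq> V \<and> card S \<le> k}" by blast
    hence finA: "finite ?A" using fP by simp
    have "objective V d g lam {} \<in> ?A" by force
    hence neA: "?A \<noteq> {}" by blast
    let ?B = "{g S | S. S \<subseteq> V \<and> card S \<le> k}"
    have "?B = g ` {S. S \<subseteq> V \<and> card S \<le> k}" by blast
    hence finB: "finite ?B" using fP by simp
    have "\<forall>x\<in>?A. x \<le> G + L"
    proof
      fix x assume "x \<in> ?A"
      then obtain S where S: "S \<subseteq> V" "card S \<le> k" "x = objective V d g lam S" by blast
      have "g S \<le> G" unfolding G_def gmax_def using finB S by (intro Max_ge) auto
      moreover have "diversity V d S \<le> dmax V d" using div_bounds[OF assms(1,2) S(1) Vne] by simp
      hence "lam * diversity V d S \<le> L" unfolding L_def using assms(6) mult_left_mono by blast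
      ultimately show "x \<le> G + L" using S(3) unfolding objective_def by simp
    qed
    thus ?thesis unfolding OPT_def using finA neA by (simp add: Max_le_iff)
  qed
  have f1: "objective V d g lam S1 \<ge> a * G"
  proof -
    have "0 \<le> lam * diversity V d S1" using div_bounds[OF assms(1,2,8) Vne] assms(6) by simp
    thus ?thesis using assms(10) unfolding objective_def a_def G_def by simp
  qed
  have f2: "objective V d g lam {u,v} \<ge> L"
  proof -
    have "diversity V d {u,v} = dmax V d"
    proof (cases "u = v")
      case True thus ?thesis unfolding diversity_def by simp
    next
      case False
      have "{d x y | x y. x \<in> {u,v} \<and> y \<in> {u,v} \<and> x \<noteq> y} = {d u v, d v u}"
        using False by auto
      moreover have "d v u = d u v" using assms(2,11,12) unfolding metric_on_def by auto
      ultimately show ?thesis using False assms(13) unfolding diversity_def by simp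
    qed
    moreover have "g {u,v} \<ge> 0" using assms(3,11,12) by simp
    ultimately show ?thesis unfolding objective_def L_def by simp
  qed
  have e: "exp 1 > (1::real)" by simp
  have aeq: "(exp 1 - 1) / (2 * exp 1 - 1) = a / (1 + a)"
  proof -
    have ep: "exp 1 > (0::real)" by simp
    have a1: "a = (exp 1 - 1) / exp 1" unfolding a_def using ep by (simp add: field_simps)
    have ne: "exp 1 \<noteq> (0::real)" by simp
    have "(2 * exp 1 - 1) / exp 1 = 2 * exp 1 / exp 1 - 1 / (exp 1::real)" by (rule diff_divide_distrib)
    also have "2 * exp 1 / exp 1 = (2::real)" using ne by simp
    finally have a2: "1 + a = (2 * exp 1 - 1) / exp 1" unfolding a_def by linarith
    show ?thesis using ep by (subst a2, subst a1, simp)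
  qed
  have apos: "a > 0" "a < 1" unfolding a_def using e by (auto simp: field_simps)
  let ?m = "max (objective V d g lam S1) (objective V d g lam {u, v})"
  have "a * (G + L) \<le> ?m * (1 + a)"
  proof -
    have "a * G \<le> ?m" using f1 by linarith
    moreover have "a * L \<le> a * ?m" using f2 apos by (intro mult_left_mono) auto
    ultimately show ?thesis by (simp add: algebra_simps)
  qed
  hence "a / (1 + a) * (G + L) \<le> ?m" using apos by (simp add: field_simps)
  moreover have "a / (1 + a) * OPT V d g lam k \<le> a / (1 + a) * (G + L)"
    using OPTle apos by (intro mult_left_mono) auto
  ultimately show ?thesis using aeq by simp
qed

end
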